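(* For all integers $r, k \geq 2$, $$ P_r(k) \geq P_{r-1}(k) + f_{k,k+1}\big(P_r(k)\big). $$
   Context: A colour pattern on a vertex set $V$ is a sequence $G_1,\dots,G_r$ ($r\ge1$) of pairwise edge-disjoint graphs all having vertex set $V$; it is $K_{k+1}$-free if no $G_i$ contains $K_{k+1}$. Given a colour pattern $G_1,\dots,G_r$ on $V$ and a colouring $c: V \to [r]$, a strongly monochromatic $K_k$ is a set of $k$ vertices all receiving the same colour $i$ under $c$ and forming a clique in $G_i$. $P_r(k)$ is the smallest integer $n$ such that there exists a $K_{k+1}$-free colour pattern $G_1,\dots,G_r$ on an $n$-element vertex set $V$ such that every colouring $V \to [r]$ yields a strongly monochromatic $K_k$. For a graph $F$, the $k$-independence number $\alpha_k(F)$ is the largest size of a vertex subset of $F$ containing no $K_k$. The Erdős–Rogers function $f_{k,k+1}(n)$ is the minimum of $\alpha_k(F)$ over all $K_{k+1}$-free graphs $F$ on $n$ vertices. *)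

theory Defs
  imports Main
begin

definition graph_on :: "'a set \<Rightarrow> 'a set set \<Rightarrow> bool" where
  "graph_on V E \<longleftrightarrow> E \<subseteq> {e. e \<subseteq> V \<and> card e = 2}"

definition is_clique :: "'a set set \<Rightarrow> 'a set \<Rightarrow> bool" where
  "is_clique E S \<longleftrightarrow> (\<forall>x\<in>S. \<forall>y\<in>S. x \<noteq> y \<longrightarrow> {x, y} \<in> E)"

definition K_free :: "'a set \<Rightarrow> 'a set set \<Rightarrow> nat \<Rightarrow> bool" where
  "K_free V E m \<longleftrightarrow> \<not> (\<exists>S. S \<subseteq> V \<and> card S = m \<and> is_clique E S)"

definition colour_pattern :: "'a set \<Rightarrow> nat \<Rightarrow> (nat \<Rightarrow> 'a set set) \<Rightarrow> bool" where
  "colour_pattern V r G \<longleftrightarrow> r \<ge> 1 \<and> (\<forall>i\<in>{1..r}. graph_on V (G i)) \<and>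
     (\<forall>i\<in>{1..r}. \<forall>j\<in>{1..r}. i \<noteq> j \<longrightarrow> G i \<inter> G j = {})"

definition strongly_mono_clique ::
  "'a set \<Rightarrow> (nat \<Rightarrow> 'a set set) \<Rightarrow> ('a \<Rightarrow> nat) \<Rightarrow> nat \<Rightarrow> 'a set \<Rightarrow> bool" where
  "strongly_mono_clique V G c k S \<longleftrightarrow>
     S \<subseteq> V \<and> card S = k \<and> (\<exists>i. (\<forall>v\<in>S. c v = i) \<and> is_clique (G i) S)"

definition P :: "nat \<Rightarrow> nat \<Rightarrow> nat" where
  "P r k = (LEAST n. \<exists>G. colour_pattern {0..<n} r G \<and>
      (\<forall>i\<in>{1..r}. K_free {0..<n} (G i) (k + 1)) \<and>
      (\<forall>c. (\<forall>v\<in>{0..<n}. c v \<in> {1..r}) \<longrightarrow>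
           (\<exists>S. strongly_mono_clique {0..<n} G c k S)))"

definition alpha_k :: "'a set \<Rightarrow> 'a set set \<Rightarrow> nat \<Rightarrow> nat" where
  "alpha_k V E k = Max {card S | S. S \<subseteq> V \<and> K_free S E k}"

definition erdos_rogers :: "nat \<Rightarrow> nat \<Rightarrow> nat" where
  "erdos_rogers k n = Min {alpha_k {0..<n} F k | F.
      graph_on {0..<n} F \<and> K_free {0..<n} F (k + 1)}"

end

theory Submission
  imports Defs
begin

definition good :: "'a set \<Rightarrow> nat \<Rightarrow> (nat \<Rightarrow> 'a set set) \<Rightarrow> nat \<Rightarrow> bool" where
  "good V r G k \<longleftrightarrow> colour_pattern V r G \<and>
      (\<forall>i\<in>{1..r}. K_free V (G i) (k + 1)) \<and>
      (\<forall>c. (\<forall>v\<in>V. c v \<in> {1..r}) \<longrightarrow>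
           (\<exists>S. strongly_mono_clique V G c k S))"

lemma P_eq: "P r k = (LEAST n. \<exists>G. good {0..<n} r G k)"
  by (simp add: P_def good_def)

lemma good_transfer:
  assumes g: "good V r G k" and f: "bij_betw f V W" and k: "k \<ge> 1"
  shows "\<exists>G'. good W r G' k"
proof -
  define G' where "G' i = (\<lambda>e. f ` e) ` G i" for i
  have inj: "inj_on f V" and im: "f ` V = W" using f by (auto simp: bij_betw_def)
  from g have cp: "colour_pattern V r G" and kf: "\<forall>i\<in>{1..r}. K_free V (G i) (k + 1)"
    and mono: "\<forall>c. (\<forall>v\<in>V. c v \<in> {1..r}) \<longrightarrow> (\<exists>S. strongly_mono_clique V G c k S)"
    by (auto simp: good_def)
  have edges: "e \<subseteq> V \<and> card e = 2" if "i\<in>{1..r}" "e \<in> G i" for i e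
    using cp that unfolding colour_pattern_def graph_on_def by blast
  have key: "{f x, f y} \<in> G' i \<longleftrightarrow> {x,y} \<in> G i" if "i\<in>{1..r}" "x\<in>V" "y\<in>V" for i x y
  proof
    assume "{f x, f y} \<in> G' i"
    then obtain e where e: "e \<in> G i" "f ` e = f ` {x,y}" by (auto simp: G'_def)
    then have "e = {x,y}" using inj_on_image_eq_iff[OF inj, of e "{x,y}"] edges[OF that(1) e(1)] that by auto
    then show "{x,y} \<in> G i" using e by simp
  next
    assume "{x,y} \<in> G i"
    then show "{f x, f y} \<in> G' i" unfolding G'_def by (metis image_empty image_eqI image_insert)
  qed
  have clique: "is_clique (G' i) (f ` S) \<longleftrightarrow> is_clique (G i) S" if "i\<in>{1..r}" "S \<subseteq> V" for i S
  proof
    assume a: "is_clique (G' i) (f ` S)"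
    show "is_clique (G i) S" unfolding is_clique_def
    proof (intro ballI impI)
      fix x y assume "x \<in> S" "y \<in> S" "x \<noteq> y"
      moreover have "f x \<noteq> f y" using calculation inj that(2) by (meson inj_on_eq_iff subsetD)
      ultimately show "{x,y} \<in> G i" using a key[OF that(1)] that(2) unfolding is_clique_def by blast
    qed
  next
    assume a: "is_clique (G i) S"
    show "is_clique (G' i) (f ` S)" unfolding is_clique_def
    proof (intro ballI impI)
      fix x' y' assume "x' \<in> f ` S" "y' \<in> f ` S" "x' \<noteq> y'"
      then obtain x y where "x \<in> S" "y \<in> S" "x' = f x" "y' = f y" "x \<noteq> y" by blast
      then show "{x',y'} \<in> G' i" using a key[OF that(1)] that(2) unfolding is_clique_def by blast
    qed
  qed
  have "colour_pattern W r G'"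
    unfolding colour_pattern_def
  proof (intro conjI ballI impI)
    show "1 \<le> r" using cp by (simp add: colour_pattern_def)
  next
    fix i assume i: "i \<in> {1..r}"
    show "graph_on W (G' i)" unfolding graph_on_def
    proof
      fix e' assume "e' \<in> G' i"
      then obtain e where e: "e \<in> G i" "e' = f ` e" by (auto simp: G'_def)
      have "card e' = card e" using e edges[OF i e(1)] inj by (simp add: card_image inj_on_subset)
      then show "e' \<in> {e. e \<subseteq> W \<and> card e = 2}" using e edges[OF i e(1)] im by auto
    qed
  next
    fix i j assume i: "i \<in> {1..r}" and j: "j \<in> {1..r}" and ij: "i \<noteq> j"
    show "G' i \<inter> G' j = {}"
    proof (rule ccontr)
      assume "G' i \<inter> G' j \<noteq> {}"
      then obtain e1 e2 where e: "e1 \<in> G i" "e2 \<in> G j" "f ` e1 = f ` e2" by (auto simp: G'_def)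
      have s1: "e1 \<subseteq> V" using edges[OF i e(1)] by simp
      have s2: "e2 \<subseteq> V" using edges[OF j e(2)] by simp
      have "e1 = e2" using e(3) inj_on_image_eq_iff[OF inj s1 s2] by simp
      moreover have "G i \<inter> G j = {}" using cp i j ij by (simp add: colour_pattern_def)
      ultimately show False using e by blast
    qed
  qed
  moreover have "\<forall>i\<in>{1..r}. K_free W (G' i) (k + 1)"
  proof (intro ballI)
    fix i assume i: "i \<in> {1..r}"
    show "K_free W (G' i) (k + 1)" unfolding K_free_def
    proof
      assume "\<exists>S. S \<subseteq> W \<and> card S = k + 1 \<and> is_clique (G' i) S"
      then obtain S' where S': "S' \<subseteq> W" "card S' = k + 1" "is_clique (G' i) S'" by blast
      define S where "S = V \<inter> f -` S'"
      have fS: "f ` S = S'" using S'(1) im unfolding S_def by auto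
      have cS: "card S = k + 1" using fS S'(2) inj by (metis S_def card_image inf_le1 inj_on_subset)
      have "is_clique (G i) S" using clique[OF i, of S] fS S'(3) by (simp add: S_def)
      then show False using kf i cS unfolding K_free_def S_def by blast
    qed
  qed
  moreover have "\<forall>c. (\<forall>v\<in>W. c v \<in> {1..r}) \<longrightarrow> (\<exists>S. strongly_mono_clique W G' c k S)"
  proof (intro allI impI)
    fix c' :: "_ \<Rightarrow> nat" assume c': "\<forall>v\<in>W. c' v \<in> {1..r}"
    have "\<forall>v\<in>V. (c' \<circ> f) v \<in> {1..r}" using c' im by auto
    then obtain S where S: "strongly_mono_clique V G (c' \<circ> f) k S" using mono by blast
    then obtain i where SV: "S \<subseteq> V" and cS: "card S = k" and col: "\<forall>v\<in>S. c' (f v) = i"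
      and cl: "is_clique (G i) S" unfolding strongly_mono_clique_def by auto
    have "S \<noteq> {}" using cS k by auto
    then obtain v where "v \<in> S" by blast
    then have i: "i \<in> {1..r}" using col c' SV im by force
    have "strongly_mono_clique W G' c' k (f ` S)"
      unfolding strongly_mono_clique_def
      using SV im cS inj col clique[OF i SV] cl
      by (auto simp: card_image inj_on_subset)
    then show "\<exists>S. strongly_mono_clique W G' c' k S" by blast
  qed
  ultimately show ?thesis unfolding good_def by blast
qed

lemma good_base:
  assumes k: "k \<ge> 1"
  shows "good {0..<k} 1 (\<lambda>i. {e. e \<subseteq> {0..<k} \<and> card e = 2}) k"
  unfolding good_def
proof (intro conjI ballI allI impI)
  show "colour_pattern {0..<k} 1 (\<lambda>i. {e. e \<subseteq> {0..<k} \<and> card e = 2})"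
    by (auto simp: colour_pattern_def graph_on_def)
next
  fix i :: nat
  show "K_free {0..<k} {e. e \<subseteq> {0..<k} \<and> card e = 2} (k + 1)"
    unfolding K_free_def
  proof
    assume "\<exists>S. S \<subseteq> {0..<k} \<and> card S = k + 1 \<and> is_clique {e. e \<subseteq> {0..<k} \<and> card e = 2} S"
    then obtain S where "S \<subseteq> {0..<k}" "card S = k + 1" by blast
    then show False using card_mono[of "{0..<k}" S] by simp
  qed
next
  fix c :: "nat \<Rightarrow> nat" assume c: "\<forall>v\<in>{0..<k}. c v \<in> {1..1}"
  have "strongly_mono_clique {0..<k} (\<lambda>i. {e. e \<subseteq> {0..<k} \<and> card e = 2}) c k {0..<k}"
    unfolding strongly_mono_clique_def
  proof (intro conjI exI[of _ 1])
    show "\<forall>v\<in>{0..<k}. c v = 1" using c by auto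
    show "is_clique {e. e \<subseteq> {0..<k} \<and> card e = 2} {0..<k}" unfolding is_clique_def by auto
  qed simp_all
  then show "\<exists>S. strongly_mono_clique {0..<k} (\<lambda>i. {e. e \<subseteq> {0..<k} \<and> card e = 2}) c k S"
    by blast
qed

lemma good_step:
  fixes H :: "nat \<Rightarrow> 'a set set"
  assumes g: "good U r H k" and k: "k \<ge> 1" and fin: "finite U"
  shows "\<exists>G. good ({0..<k} \<times> U) (Suc r) G k"
proof -
  define V where "V = {0..<k} \<times> U"
  define G where "G i = (if i = Suc r then
      {e. e \<subseteq> V \<and> card e = 2 \<and> (\<forall>x\<in>e. \<forall>y\<in>e. x \<noteq> y \<longrightarrow> fst x \<noteq> fst y)}
    else {e. e \<subseteq> V \<and> card e = 2 \<and> (\<forall>x\<in>e. \<forall>y\<in>e. fst x = fst y) \<and> snd ` e \<in> H i})" for i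
  from g have cp: "colour_pattern U r H" and kf: "\<forall>i\<in>{1..r}. K_free U (H i) (k + 1)"
    and mono: "\<forall>c. (\<forall>v\<in>U. c v \<in> {1..r}) \<longrightarrow> (\<exists>S. strongly_mono_clique U H c k S)"
    by (auto simp: good_def)
  have r1: "r \<ge> 1" using cp by (simp add: colour_pattern_def)
  have memR: "{x,y} \<in> G (Suc r) \<longleftrightarrow> x \<in> V \<and> y \<in> V \<and> fst x \<noteq> fst y" if "x \<noteq> y" for x y
    using that by (auto simp: G_def)
  have memI: "{x,y} \<in> G i \<longleftrightarrow> x \<in> V \<and> y \<in> V \<and> fst x = fst y \<and> {snd x, snd y} \<in> H i"
    if "x \<noteq> y" "i \<noteq> Suc r" for x y i
    using that by (auto simp: G_def)
  have card2: "\<exists>x y. x \<noteq> y \<and> e = {x,y}" if "card e = 2" for e :: "(nat \<times> 'a) set"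
    using that by (meson card_2_iff)
  have "colour_pattern V (Suc r) G"
    unfolding colour_pattern_def
  proof (intro conjI ballI impI)
    fix i assume "i \<in> {1..Suc r}"
    show "graph_on V (G i)" by (auto simp: graph_on_def G_def)
  next
    fix i j assume i: "i \<in> {1..Suc r}" and j: "j \<in> {1..Suc r}" and ij: "i \<noteq> j"
    show "G i \<inter> G j = {}"
    proof (rule ccontr)
      assume "G i \<inter> G j \<noteq> {}"
      then obtain e where e: "e \<in> G i" "e \<in> G j" by blast
      then have "card e = 2" by (auto simp: G_def split: if_splits)
      then obtain x y where xy: "x \<noteq> y" "e = {x,y}" using card2 by blast
      show False
      proof (cases "i = Suc r \<or> j = Suc r")
        case True
        then show False using e xy memR memI ij by metis
      next
        case False
        then have "{snd x, snd y} \<in> H i" "{snd x, snd y} \<in> H j" using e xy memI by auto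
        moreover have "i \<in> {1..r}" "j \<in> {1..r}" using i j False by auto
        ultimately show False using cp ij unfolding colour_pattern_def by blast
      qed
    qed
  qed simp
  moreover have "\<forall>i\<in>{1..Suc r}. K_free V (G i) (k + 1)"
  proof (intro ballI)
    fix i assume i: "i \<in> {1..Suc r}"
    show "K_free V (G i) (k + 1)" unfolding K_free_def
    proof
      assume "\<exists>S. S \<subseteq> V \<and> card S = k + 1 \<and> is_clique (G i) S"
      then obtain S where S: "S \<subseteq> V" "card S = k + 1" "is_clique (G i) S" by blast
      show False
      proof (cases "i = Suc r")
        case True
        have "inj_on fst S"
          using S(3) memR unfolding is_clique_def inj_on_def True by metis
        moreover have "fst ` S \<subseteq> {0..<k}" using S(1) by (auto simp: V_def)
        ultimately have "card S \<le> k" using card_image card_mono by (metis card_atLeastLessThan diff_zero finite_atLeastLessThan)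
        then show False using S by simp
      next
        case False
        have i': "i \<in> {1..r}" using i False by auto
        have ne: "S \<noteq> {}" using S by auto
        then obtain s0 where s0: "s0 \<in> S" by blast
        have fst_eq: "fst x = fst s0" if "x \<in> S" for x
          using S(3) memI[OF _ False] that s0 unfolding is_clique_def by metis
        have "inj_on snd S" unfolding inj_on_def using fst_eq by (metis prod.expand)
        then have cT: "card (snd ` S) = k + 1" using S(2) by (simp add: card_image)
        have "snd ` S \<subseteq> U" using S(1) by (auto simp: V_def)
        moreover have "is_clique (H i) (snd ` S)" unfolding is_clique_def
        proof (intro ballI impI)
          fix u v assume "u \<in> snd ` S" "v \<in> snd ` S" "u \<noteq> v"
          then obtain x y where "x \<in> S" "y \<in> S" "u = snd x" "v = snd y" "x \<noteq> y" by blast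
          then show "{u,v} \<in> H i" using S(3) memI[OF _ False] unfolding is_clique_def by metis
        qed
        ultimately show False using kf i' cT unfolding K_free_def by blast
      qed
    qed
  qed
  moreover have "\<forall>c. (\<forall>v\<in>V. c v \<in> {1..Suc r}) \<longrightarrow> (\<exists>S. strongly_mono_clique V G c k S)"
  proof (intro allI impI)
    fix c :: "nat \<times> 'a \<Rightarrow> nat" assume c: "\<forall>v\<in>V. c v \<in> {1..Suc r}"
    show "\<exists>S. strongly_mono_clique V G c k S"
    proof (cases "\<exists>j<k. \<forall>u\<in>U. c (j,u) \<noteq> Suc r")
      case True
      then obtain j where j: "j < k" "\<forall>u\<in>U. c (j,u) \<noteq> Suc r" by blast
      have "\<forall>u\<in>U. c (j,u) \<in> {1..r}"
      proof
        fix u assume "u \<in> U"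
        then have "c (j,u) \<in> {1..Suc r}" "c (j,u) \<noteq> Suc r" using j c by (auto simp: V_def)
        then show "c (j,u) \<in> {1..r}" by auto
      qed
      then obtain T where T: "strongly_mono_clique U H (\<lambda>u. c (j,u)) k T"
        using mono[rule_format, of "\<lambda>u. c (j,u)"] by blast
      then obtain i where TU: "T \<subseteq> U" and cT: "card T = k" and col: "\<forall>u\<in>T. c (j,u) = i"
        and cl: "is_clique (H i) T" unfolding strongly_mono_clique_def by auto
      have "T \<noteq> {}" using cT k by auto
      then obtain u where "u \<in> T" by blast
      then have i: "i \<noteq> Suc r" using col j TU by auto
      have "strongly_mono_clique V G c k (Pair j ` T)"
        unfolding strongly_mono_clique_def
      proof (intro conjI exI)
        show "Pair j ` T \<subseteq> V" using TU j by (auto simp: V_def)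
        show "card (Pair j ` T) = k" using cT by (simp add: card_image inj_on_def)
        show "\<forall>v\<in>Pair j ` T. c v = i" using col by auto
        show "is_clique (G i) (Pair j ` T)" unfolding is_clique_def
        proof (intro ballI impI)
          fix x y assume "x \<in> Pair j ` T" "y \<in> Pair j ` T" "x \<noteq> y"
          then show "{x,y} \<in> G i" using memI[OF _ i] cl TU j unfolding is_clique_def
            by (auto simp: V_def)
        qed
      qed
      then show ?thesis by blast
    next
      case False
      then have "\<forall>j<k. \<exists>u\<in>U. c (j,u) = Suc r" by blast
      then obtain g where g: "\<forall>j<k. g j \<in> U \<and> c (j, g j) = Suc r" by metis
      define S where "S = (\<lambda>j. (j, g j)) ` {0..<k}"
      have "strongly_mono_clique V G c k S"
        unfolding strongly_mono_clique_def
      proof (intro conjI exI)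
        show "S \<subseteq> V" using g by (auto simp: V_def S_def)
        show "card S = k" unfolding S_def by (simp add: card_image inj_on_def)
        show "\<forall>v\<in>S. c v = Suc r" using g by (auto simp: S_def)
        show "is_clique (G (Suc r)) S" unfolding is_clique_def
        proof (intro ballI impI)
          fix x y assume "x \<in> S" "y \<in> S" "x \<noteq> y"
          then show "{x,y} \<in> G (Suc r)" using memR g by (auto simp: V_def S_def)
        qed
      qed
      then show ?thesis by blast
    qed
  qed
  ultimately show ?thesis unfolding good_def V_def by blast
qed

lemma good_exists:
  assumes k: "k \<ge> 1" and r: "r \<ge> 1"
  shows "\<exists>n::nat. \<exists>G. good {0..<n} r G k"
  using r
proof (induction r rule: nat_induct_at_least)
  case base
  show ?case by (rule exI[of _ k], rule exI, rule good_base[OF k])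
next
  case (Suc r)
  then obtain n :: nat and H where "good {0..<n} r H k" by blast
  then obtain G where G: "good ({0..<k} \<times> {0..<n}) (Suc r) G k" using good_step k by blast
  obtain h where "bij_betw h ({0..<k} \<times> {0..<n}) {0..<card ({0..<k} \<times> {0..<n})}"
    using finite_same_card_bij[of "{0..<k} \<times> {0..<n}" "{0..<card ({0..<k} \<times> {0..<n})}"] by auto
  then show ?case using good_transfer[OF G _ k] by blast
qed

lemma alpha_k_props:
  assumes fin: "finite V" and k: "k \<ge> 1"
  shows "\<exists>S. S \<subseteq> V \<and> K_free S E k \<and> alpha_k V E k = card S"
proof -
  let ?A = "{card S | S. S \<subseteq> V \<and> K_free S E k}"
  have "?A \<subseteq> {0..card V}" using fin by (auto intro: card_mono)
  then have "finite ?A" using finite_subset by blast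
  moreover have "K_free {} E k" using k by (auto simp: K_free_def)
  then have "?A \<noteq> {}" by blast
  ultimately have "Max ?A \<in> ?A" by (rule Max_in)
  then show ?thesis unfolding alpha_k_def by blast
qed

lemma alpha_k_le:
  assumes fin: "finite V" and k: "k \<ge> 1"
  shows "alpha_k V E k \<le> card V"
  using alpha_k_props[OF fin k, of E] card_mono[OF fin] by auto

theorem proposition3p2:
  fixes r k :: nat
  assumes "r \<ge> 2" and "k \<ge> 2"
  shows "P r k \<ge> P (r - 1) k + erdos_rogers k (P r k)"
proof -
  have k1: "k \<ge> 1" and r1: "r \<ge> 1" using assms by auto
  define n where "n = P r k"
  have "\<exists>n::nat. \<exists>G. good {0..<n} r G k" using good_exists[OF k1 r1] .
  then have "\<exists>G. good {0..<n} r G k" unfolding n_def P_eq by (rule LeastI_ex)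
  then obtain G where g: "good {0..<n} r G k" by blast
  let ?V = "{0..<n}"
  from g have cp: "colour_pattern ?V r G" and kf: "\<forall>i\<in>{1..r}. K_free ?V (G i) (k + 1)"
    and mono: "\<forall>c. (\<forall>v\<in>?V. c v \<in> {1..r}) \<longrightarrow> (\<exists>S. strongly_mono_clique ?V G c k S)"
    by (auto simp: good_def)
  have rr: "r \<in> {1..r}" using r1 by simp
  have grF: "graph_on ?V (G r)" using cp rr by (simp add: colour_pattern_def)
  have kfF: "K_free ?V (G r) (k + 1)" using kf rr by blast
  obtain S where S: "S \<subseteq> ?V" "K_free S (G r) k" "alpha_k ?V (G r) k = card S"
    using alpha_k_props[of ?V k "G r"] k1 by auto
  let ?B = "{alpha_k ?V F k | F. graph_on ?V F \<and> K_free ?V F (k + 1)}"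
  have "?B \<subseteq> {0..n}"
  proof
    fix x assume "x \<in> ?B"
    then obtain F where "x = alpha_k ?V F k" by blast
    then show "x \<in> {0..n}" using alpha_k_le[of ?V k F] k1 by simp
  qed
  then have "finite ?B" using finite_subset by blast
  moreover have "alpha_k ?V (G r) k \<in> ?B" using grF kfF by blast
  ultimately have er: "erdos_rogers k n \<le> card S"
    using Min_le S(3) unfolding erdos_rogers_def by simp
  define W where "W = ?V - S"
  define G' where "G' i = {e \<in> G i. e \<subseteq> W}" for i
  have gW: "good W (r - 1) G' k" unfolding good_def
  proof (intro conjI ballI allI impI)
    show "colour_pattern W (r - 1) G'"
      unfolding colour_pattern_def
    proof (intro conjI ballI impI)
      show "1 \<le> r - 1" using assms(1) by simp
    next
      fix i assume "i \<in> {1..r - 1}"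
      then have i: "i \<in> {1..r}" by auto
      have "graph_on ?V (G i)" using cp i by (simp add: colour_pattern_def)
      then show "graph_on W (G' i)" unfolding graph_on_def G'_def by blast
    next
      fix i j assume "i \<in> {1..r - 1}" "j \<in> {1..r - 1}" and ij: "i \<noteq> j"
      then have i: "i \<in> {1..r}" and j: "j \<in> {1..r}" by auto
      have "G i \<inter> G j = {}" using cp i j ij by (simp add: colour_pattern_def)
      then show "G' i \<inter> G' j = {}" unfolding G'_def by blast
    qed
  next
    fix i assume i: "i \<in> {1..r - 1}"
    then have "i \<in> {1..r}" by auto
    then have kfi: "K_free ?V (G i) (k + 1)" using kf by blast
    show "K_free W (G' i) (k + 1)" unfolding K_free_def
    proof
      assume "\<exists>T. T \<subseteq> W \<and> card T = k + 1 \<and> is_clique (G' i) T"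
      then obtain T where T: "T \<subseteq> W" "card T = k + 1" "is_clique (G' i) T" by blast
      have "is_clique (G i) T" using T(3) unfolding is_clique_def G'_def by blast
      moreover have "T \<subseteq> ?V" using T(1) unfolding W_def by blast
      ultimately show False using kfi T(2) unfolding K_free_def by blast
    qed
  next
    fix c' :: "nat \<Rightarrow> nat" assume c': "\<forall>v\<in>W. c' v \<in> {1..r - 1}"
    define c where "c v = (if v \<in> S then r else c' v)" for v
    have "\<forall>v\<in>?V. c v \<in> {1..r}"
    proof
      fix v assume v: "v \<in> ?V"
      show "c v \<in> {1..r}"
      proof (cases "v \<in> S")
        case True then show ?thesis using r1 by (simp add: c_def)
      next
        case False
        then have "c' v \<in> {1..r - 1}" using c' v by (simp add: W_def)
        then show ?thesis using False unfolding c_def by auto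
      qed
    qed
    then obtain T where T: "strongly_mono_clique ?V G c k T" using mono by blast
    then obtain i where TV: "T \<subseteq> ?V" and cT: "card T = k" and col: "\<forall>v\<in>T. c v = i"
      and cl: "is_clique (G i) T" unfolding strongly_mono_clique_def by auto
    have "T \<noteq> {}" using cT k1 by auto
    then obtain t where t: "t \<in> T" by blast
    show "\<exists>S. strongly_mono_clique W G' c' k S"
    proof (cases "i = r")
      case True
      have "T \<subseteq> S"
      proof
        fix v assume v: "v \<in> T"
        show "v \<in> S"
        proof (rule ccontr)
          assume "v \<notin> S"
          then have "c' v = r" "c' v \<in> {1..r - 1}" using col v True TV c' by (auto simp: c_def W_def)
          then show False by auto
        qed
      qed
      then have "\<exists>T'. T' \<subseteq> S \<and> card T' = k \<and> is_clique (G r) T'" using cT cl True by blast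
      then show ?thesis using S(2) unfolding K_free_def by blast
    next
      case False
      have TW: "T \<subseteq> W"
      proof
        fix v assume v: "v \<in> T"
        then have "v \<notin> S" using col False by (auto simp: c_def)
        then show "v \<in> W" using v TV by (auto simp: W_def)
      qed
      have "strongly_mono_clique W G' c' k T"
        unfolding strongly_mono_clique_def
      proof (intro conjI exI)
        show "T \<subseteq> W" by (rule TW)
        show "card T = k" by (rule cT)
        show "\<forall>v\<in>T. c' v = i"
        proof
          fix v assume v: "v \<in> T"
          then have "v \<notin> S" using TW unfolding W_def by blast
          then show "c' v = i" using col v unfolding c_def by force
        qed
        show "is_clique (G' i) T" using cl TW unfolding is_clique_def G'_def by auto
      qed
      then show ?thesis by blast
    qed
  qed
  have finW: "finite W" by (simp add: W_def)
  obtain h where "bij_betw h W {0..<card W}"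
    using finite_same_card_bij[of W "{0..<card W}"] finW by auto
  then obtain G'' where "good {0..<card W} (r - 1) G'' k" using good_transfer[OF gW _ k1] by blast
  then have "P (r - 1) k \<le> card W" unfolding P_eq by (intro Least_le) blast
  moreover have "card W = n - card S" unfolding W_def using S(1) by (simp add: card_Diff_subset finite_subset)
  moreover have "card S \<le> n" using card_mono[OF _ S(1)] by simp
  ultimately show ?thesis using er unfolding n_def by linarith
qed

end
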